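(* A nonzero $Q(X,Y)\in M_{s,\ell}$ has minimal $(1,k-1)$-weighted degree among the nonzero elements of $M_{s,\ell}$ if and only if $\varphi(Q(X,Y))$ has minimal $(1,-1)$-weighted degree among the nonzero elements of $\varphi(M_{s,\ell})$.
   Context: Let $\mathbb F_q$ be a finite field, $1\le k<n<q$, $\alpha_0,\dots,\alpha_{n-1}$ distinct nonzero elements of $\mathbb F_q$, $w_0,\dots,w_{n-1}$ nonzero elements of $\mathbb F_q$, and $r\in\mathbb F_q^n$ a word with $r_i=0$ for $i=0,\dots,k-1$; let $r_i'=r_i/w_i$. For positive integers $s\le\ell$, $M_{s,\ell}$ is the $\mathbb F_q[X]$-module of all $Q\in\mathbb F_q[X,Y]$ of $Y$-degree at most $\ell$ such that for each $i$, $Q(X+\alpha_i,Y+r_i')$ has no monomials of total degree less than $s$. Let $L(X)=\prod_{i=0}^{k-1}(X-\alpha_i)$ and $\varphi(Q)(X,Y)=L(X)^{-s}Q(X,L(X)Y)$ for $Q\in M_{s,\ell}$ (under the assumption on $r$, $\varphi(Q)\in\mathbb F_q[X,Y]$); $\varphi(M_{s,\ell})$ is the image. For integers $u,v$, the $(u,v)$-weighted degree of a nonzero bivariate polynomial is the maximum of $ui+vj$ over its monomials $X^iY^j$. *)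

theory Defs
  imports "HOL-Computational_Algebra.Polynomial"
begin

text \<open>Bivariate polynomials in X, Y over 'a are represented as 'a poly poly:
  polynomials in Y whose coefficients are polynomials in X.\<close>

definition bcoeff :: "'a::zero poly poly \<Rightarrow> nat \<Rightarrow> nat \<Rightarrow> 'a" where
  "bcoeff Q i j = coeff (coeff Q j) i"

definition bshift :: "'a::comm_ring_1 poly poly \<Rightarrow> 'a \<Rightarrow> 'a \<Rightarrow> 'a poly poly" where
  "bshift Q a b = pcompose (map_poly (\<lambda>p. pcompose p [:a, 1:]) Q) [:[:b:], 1:]"

definition wdeg :: "int \<Rightarrow> int \<Rightarrow> 'a::zero poly poly \<Rightarrow> int" where
  "wdeg u v Q = Max {u * int i + v * int j | i j. bcoeff Q i j \<noteq> 0}"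

definition Mmod :: "nat \<Rightarrow> ('a::field) list \<Rightarrow> 'a list \<Rightarrow> nat \<Rightarrow> nat \<Rightarrow> 'a poly poly set" where
  "Mmod n alpha r' s l = {Q. degree Q \<le> l \<and>
     (\<forall>i<n. \<forall>a b. a + b < s \<longrightarrow> bcoeff (bshift Q (alpha ! i) (r' ! i)) a b = 0)}"

definition Lpoly :: "nat \<Rightarrow> ('a::field) list \<Rightarrow> 'a poly" where
  "Lpoly k alpha = (\<Prod>i<k. [:- (alpha ! i), 1:])"

text \<open>phi(Q)(X,Y) = L(X)^(-s) Q(X, L(X) Y): the coefficient of Y^j is
  coeff Q j * L^j / L^s (an exact polynomial division under the hypotheses).\<close>
definition phi :: "'a::field poly \<Rightarrow> nat \<Rightarrow> 'a poly poly \<Rightarrow> 'a poly poly" where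
  "phi L s Q = Poly (map (\<lambda>j. (coeff Q j * L ^ j) div L ^ s) [0..<Suc (degree Q)])"

end

theory Submission imports Defs begin

lemma pcompose_power_left: "(q ^ m) \<circ>\<^sub>p r = (q \<circ>\<^sub>p r) ^ m"
  by (induction m) (simp_all add: pcompose_mult pcompose_1)

lemma lin_dvd:
  fixes p :: "'a::field poly"
  assumes "\<forall>c<m. coeff (p \<circ>\<^sub>p [:a,1:]) c = 0"
  shows "[:-a,1:]^m dvd p"
proof -
  have "monom 1 m dvd (p \<circ>\<^sub>p [:a,1:])" using assms monom_1_dvd_iff' by blast
  then obtain h where h: "p \<circ>\<^sub>p [:a,1:] = monom 1 m * h" by (elim dvdE) auto
  have "p = (p \<circ>\<^sub>p [:a,1:]) \<circ>\<^sub>p [:-a,1:]"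
    by (simp add: pcompose_assoc[symmetric] pcompose_pCons)
  also have "\<dots> = [:-a,1:]^m * (h \<circ>\<^sub>p [:-a,1:])"
    by (simp add: h pcompose_mult monom_altdef pcompose_power_left pcompose_pCons)
  finally show ?thesis by (metis dvd_triv_left)
qed

lemma coprime_lin:
  fixes a b :: "'a::field"
  assumes "a \<noteq> b" shows "coprime [:-a,1:] [:-b,1:]"
proof (rule coprimeI)
  fix c assume "c dvd [:-a,1:]" "c dvd [:-b,1:]"
  then have "c dvd [:-a,1:] - [:-b,1:]" by (rule dvd_diff)
  moreover have "[:-a,1:] - [:-b,1:] = [:b - a:]" by simp
  moreover have "is_unit [:b-a:]" using assms by (intro is_unit_triv) simp
  ultimately show "is_unit c" using dvd_unit_imp_unit by metis
qed

lemma prod_lin_dvd: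
  fixes p :: "'a::field poly" and K :: nat
  assumes "\<forall>i<K. \<forall>j<K. i \<noteq> j \<longrightarrow> f i \<noteq> f j"
    and "\<forall>i<K. [:-f i,1:]^m dvd p"
  shows "(\<Prod>i<K. [:-f i,1:])^m dvd p"
  using assms
proof (induction K arbitrary: p)
  case 0 then show ?case by simp
next
  case (Suc K)
  show ?case
  proof (cases "p = 0")
    case True then show ?thesis by simp
  next
    case False
    have "[:-f K,1:]^m dvd p" using Suc.prems(2) by simp
    then obtain q where q: "p = [:-f K,1:]^m * q" by (elim dvdE)
    have q0: "q \<noteq> 0" using q False by auto
    have "\<forall>i<K. [:-f i,1:]^m dvd q"
    proof (intro allI impI)
      fix i assume i: "i < K"
      have ne: "f i \<noteq> f K" using Suc.prems(1) i by auto
      have o1: "order (f i) ([:-f K,1:]^m) = 0"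
        by (rule order_0I) (use ne in simp)
      have "[:-f i,1:]^m dvd p" using Suc.prems(2) i by simp
      then have "m \<le> order (f i) p" using False order_divides by blast
      also have "order (f i) p = order (f i) ([:-f K,1:]^m) + order (f i) q"
        unfolding q by (rule order_mult) (use q False in simp)
      also have "\<dots> = order (f i) q" using o1 by simp
      finally show "[:-f i,1:]^m dvd q" using order_divides by blast
    qed
    then have "(\<Prod>i<K. [:-f i,1:])^m dvd q" using Suc.IH Suc.prems(1) by auto
    then have "[:-f K,1:]^m * (\<Prod>i<K. [:-f i,1:])^m dvd p" using q by simp
    moreover have "(\<Prod>i<Suc K. [:-f i,1:])^m = [:-f K,1:]^m * (\<Prod>i<K. [:-f i,1:])^m"
      by (simp only: prod.lessThan_Suc power_mult_distrib mult.commute)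
    ultimately show ?thesis by simp
  qed
qed


lemma wdeg_alt:
  fixes Q :: "'a::zero poly poly"
  assumes "Q \<noteq> 0"
  shows "wdeg 1 v Q = Max ((\<lambda>j. int (degree (coeff Q j)) + v * int j) ` {j. coeff Q j \<noteq> 0})"
proof -
  let ?S = "{1 * int i + v * int j | i j. bcoeff Q i j \<noteq> 0}"
  let ?T = "(\<lambda>j. int (degree (coeff Q j)) + v * int j) ` {j. coeff Q j \<noteq> 0}"
  have finJ: "finite {j. coeff Q j \<noteq> 0}"
    by (rule finite_subset[of _ "{..degree Q}"]) (auto intro: le_degree)
  have finT: "finite ?T" using finJ by simp
  have neT: "?T \<noteq> {}" using assms by (auto simp: leading_coeff_0_iff intro!: exI[of _ "degree Q"])
  have TS: "?T \<subseteq> ?S"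
  proof
    fix x assume "x \<in> ?T"
    then obtain j where j: "coeff Q j \<noteq> 0" "x = int (degree (coeff Q j)) + v * int j" by auto
    then have "bcoeff Q (degree (coeff Q j)) j \<noteq> 0" by (simp add: bcoeff_def)
    then show "x \<in> ?S" using j by force
  qed
  have finS: "finite ?S"
  proof (rule finite_subset)
    show "?S \<subseteq> (\<lambda>(j,i). 1 * int i + v * int j) ` (SIGMA j:{..degree Q}. {..degree (coeff Q j)})"
    proof
      fix x assume "x \<in> ?S"
      then obtain i j where ij: "bcoeff Q i j \<noteq> 0" "x = 1 * int i + v * int j" by auto
      then have "coeff Q j \<noteq> 0" by (auto simp: bcoeff_def)
      then have "j \<le> degree Q" by (rule le_degree)
      moreover have "i \<le> degree (coeff Q j)" using ij(1) by (auto simp: bcoeff_def intro: le_degree)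
      ultimately show "x \<in> (\<lambda>(j,i). 1 * int i + v * int j) ` (SIGMA j:{..degree Q}. {..degree (coeff Q j)})"
        using ij(2) by force
    qed
  qed auto
  have le: "\<forall>x\<in>?S. \<exists>y\<in>?T. x \<le> y"
  proof
    fix x assume "x \<in> ?S"
    then obtain i j where ij: "bcoeff Q i j \<noteq> 0" "x = 1 * int i + v * int j" by auto
    then have "coeff Q j \<noteq> 0" by (auto simp: bcoeff_def)
    moreover have "i \<le> degree (coeff Q j)" using ij(1) by (auto simp: bcoeff_def intro: le_degree)
    ultimately show "\<exists>y\<in>?T. x \<le> y" using ij(2) by force
  qed
  have "Max ?S = Max ?T"
  proof (rule antisym)
    show "Max ?T \<le> Max ?S" using Max_mono[OF TS neT finS] .
    have "?S \<noteq> {}" using neT TS by blast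
    then have "Max ?S \<in> ?S" using finS by (intro Max_in) auto
    then obtain y where "y \<in> ?T" "Max ?S \<le> y" using le by blast
    then show "Max ?S \<le> Max ?T" using Max_ge[OF finT] order_trans by blast
  qed
  then show ?thesis unfolding wdeg_def by simp
qed

lemma coeff_phi:
  "coeff (phi L s Q) j = (if j \<le> degree Q then (coeff Q j * L^j) div L^s else 0)"
  unfolding phi_def coeff_Poly_eq
  by (auto simp: nth_default_def simp del: upt_Suc)

lemma phi_main:
  fixes L :: "'a::field poly" and Q :: "'a poly poly"
  assumes L0: "L \<noteq> 0" and Q0: "Q \<noteq> 0" and H: "\<forall>j. L^s dvd coeff Q j * L^j"
  shows "phi L s Q \<noteq> 0 \<and>
     wdeg 1 (-1) (phi L s Q) = wdeg 1 (int (degree L) - 1) Q - int s * int (degree L)"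
proof -
  let ?c = "\<lambda>j. (coeff Q j * L^j) div L^s"
  have eq: "coeff Q j * L^j = ?c j * L^s" for j using H by simp
  have cphi: "coeff (phi L s Q) j = ?c j" for j
    by (cases "j \<le> degree Q") (auto simp: coeff_phi coeff_eq_0)
  have nz: "coeff (phi L s Q) j \<noteq> 0 \<longleftrightarrow> coeff Q j \<noteq> 0" for j
    using eq[of j] L0 by (auto simp: cphi)
  have dg: "int (degree (coeff (phi L s Q) j)) - int j =
      int (degree (coeff Q j)) + (int (degree L) - 1) * int j + - (int s * int (degree L))"
    if "coeff Q j \<noteq> 0" for j
  proof -
    have "?c j \<noteq> 0" using nz[of j] that cphi by simp
    then have "degree (coeff Q j) + j * degree L = degree (?c j) + s * degree L"
      using arg_cong[OF eq[of j], of degree] that L0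
      by (simp add: degree_mult_eq degree_power_eq)
    then have "int (degree (coeff Q j)) + int j * int (degree L) = int (degree (?c j)) + int s * int (degree L)"
      by (metis of_nat_add of_nat_mult)
    then show ?thesis by (simp add: cphi algebra_simps)
  qed
  have p0: "phi L s Q \<noteq> 0"
    using nz[of "degree Q"] Q0 by auto
  have finJ: "finite {j. coeff Q j \<noteq> 0}"
    by (rule finite_subset[of _ "{..degree Q}"]) (auto intro: le_degree)
  have neJ: "{j. coeff Q j \<noteq> 0} \<noteq> {}" using Q0 by (auto intro!: exI[of _ "degree Q"])
  have "wdeg 1 (-1) (phi L s Q) =
     Max ((\<lambda>j. int (degree (coeff (phi L s Q) j)) + (-1) * int j) ` {j. coeff Q j \<noteq> 0})"
    using wdeg_alt[OF p0, of "-1"] nz by simp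
  also have "\<dots> = Max ((\<lambda>j. (int (degree (coeff Q j)) + (int (degree L) - 1) * int j) + - (int s * int (degree L))) ` {j. coeff Q j \<noteq> 0})"
    by (rule arg_cong[where f=Max], rule image_cong) (use dg in auto)
  also have "\<dots> = Max ((\<lambda>j. int (degree (coeff Q j)) + (int (degree L) - 1) * int j) ` {j. coeff Q j \<noteq> 0}) + - (int s * int (degree L))"
    by (rule Max_add_commute[OF finJ neJ])
  also have "\<dots> = wdeg 1 (int (degree L) - 1) Q - int s * int (degree L)"
    using wdeg_alt[OF Q0] by simp
  finally show ?thesis using p0 by simp
qed


lemma Mdvd:
  fixes alpha r' :: "'a::field list"
  assumes "k \<le> n" "length alpha = n" "distinct alpha" "\<forall>i<k. r' ! i = 0"
    and "Q \<in> Mmod n alpha r' s l"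
  shows "Lpoly k alpha ^ s dvd coeff Q j * Lpoly k alpha ^ j"
proof (cases "j < s")
  case True
  have "\<forall>i<k. [:-(alpha!i),1:]^(s-j) dvd coeff Q j"
  proof (intro allI impI)
    fix i assume i: "i < k"
    have bs: "bshift Q (alpha!i) (r'!i) = map_poly (\<lambda>p. p \<circ>\<^sub>p [:alpha!i,1:]) Q"
      using assms(4) i by (simp add: bshift_def)
    have "\<forall>c<s-j. coeff (coeff Q j \<circ>\<^sub>p [:alpha!i,1:]) c = 0"
    proof (intro allI impI)
      fix c assume "c < s - j"
      then have "c + j < s" by simp
      then have "bcoeff (bshift Q (alpha!i) (r'!i)) c j = 0"
        using assms(5) i assms(1) unfolding Mmod_def by auto
      then show "coeff (coeff Q j \<circ>\<^sub>p [:alpha!i,1:]) c = 0"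
        by (simp add: bs bcoeff_def coeff_map_poly)
    qed
    then show "[:-(alpha!i),1:]^(s-j) dvd coeff Q j" by (rule lin_dvd)
  qed
  moreover have "\<forall>i<k. \<forall>i'<k. i \<noteq> i' \<longrightarrow> alpha ! i \<noteq> alpha ! i'"
    using assms(1-3) by (auto simp: nth_eq_iff_index_eq)
  ultimately have "Lpoly k alpha ^ (s-j) dvd coeff Q j"
    unfolding Lpoly_def using prod_lin_dvd[of k "\<lambda>i. alpha!i" "s-j" "coeff Q j"] by simp
  then have "Lpoly k alpha ^ (s-j) * Lpoly k alpha ^ j dvd coeff Q j * Lpoly k alpha ^ j"
    by (rule mult_dvd_mono) simp
  moreover have "Lpoly k alpha ^ (s-j) * Lpoly k alpha ^ j = Lpoly k alpha ^ s"
    using True by (simp add: power_add[symmetric])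
  ultimately show ?thesis by simp
next
  case False
  then have "Lpoly k alpha ^ s dvd Lpoly k alpha ^ j" by (intro le_imp_power_dvd) simp
  then show ?thesis by (rule dvd_mult)
qed

theorem corollary4:
  fixes alpha w r :: "'a::{field,finite} list"
    and k n s l :: nat
    and Q :: "'a poly poly"
  assumes "1 \<le> k" and "k < n" and "n < card (UNIV :: 'a set)"
    and "length alpha = n" and "length w = n" and "length r = n"
    and "distinct alpha" and "\<forall>i<n. alpha ! i \<noteq> 0"
    and "\<forall>i<n. w ! i \<noteq> 0"
    and "\<forall>i<k. r ! i = 0"
    and "1 \<le> s" and "s \<le> l"
    and "Q \<in> Mmod n alpha (map2 (/) r w) s l" and "Q \<noteq> 0"
  shows "(\<forall>P\<in>Mmod n alpha (map2 (/) r w) s l. P \<noteq> 0 \<longrightarrow>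
             wdeg 1 (int k - 1) Q \<le> wdeg 1 (int k - 1) P)
     \<longleftrightarrow> (\<forall>P\<in>phi (Lpoly k alpha) s ` Mmod n alpha (map2 (/) r w) s l. P \<noteq> 0 \<longrightarrow>
             wdeg 1 (-1) (phi (Lpoly k alpha) s Q) \<le> wdeg 1 (-1) P)"
proof -
  define M where "M = Mmod n alpha (map2 (/) r w) s l"
  define L where "L = Lpoly k alpha"
  have r0: "\<forall>i<k. map2 (/) r w ! i = 0" using assms(2,5,6,10) by auto
  have L0: "L \<noteq> 0" unfolding L_def Lpoly_def by (simp add: prod_zero_iff)
  have dL: "degree L = k" unfolding L_def Lpoly_def
    by (subst degree_prod_sum_eq) auto
  have F: "phi L s P \<noteq> 0 \<and> wdeg 1 (-1) (phi L s P) = wdeg 1 (int k - 1) P - int s * int k"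
    if "P \<in> M" "P \<noteq> 0" for P
  proof -
    have "\<forall>j. L^s dvd coeff P j * L^j"
      using Mdvd[of k n alpha "map2 (/) r w" P s l] assms(2,4,7) r0 that(1)
      unfolding M_def L_def by auto
    then show ?thesis using phi_main[OF L0 that(2)] dL by simp
  qed
  have phi0: "phi L s 0 = 0" by (simp add: phi_def)
  note FQ = F[OF assms(13)[folded M_def] assms(14)]
  show ?thesis
    unfolding M_def[symmetric] L_def[symmetric]
  proof
    assume A: "\<forall>P\<in>M. P \<noteq> 0 \<longrightarrow> wdeg 1 (int k - 1) Q \<le> wdeg 1 (int k - 1) P"
    show "\<forall>P\<in>phi L s ` M. P \<noteq> 0 \<longrightarrow> wdeg 1 (-1) (phi L s Q) \<le> wdeg 1 (-1) P"
    proof (intro ballI impI)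
      fix P assume "P \<in> phi L s ` M" "P \<noteq> 0"
      then obtain P' where P': "P' \<in> M" "P = phi L s P'" by auto
      then have "P' \<noteq> 0" using \<open>P \<noteq> 0\<close> phi0 by auto
      then show "wdeg 1 (-1) (phi L s Q) \<le> wdeg 1 (-1) P"
        using F[OF P'(1)] FQ A P' by auto
    qed
  next
    assume B: "\<forall>P\<in>phi L s ` M. P \<noteq> 0 \<longrightarrow> wdeg 1 (-1) (phi L s Q) \<le> wdeg 1 (-1) P"
    show "\<forall>P\<in>M. P \<noteq> 0 \<longrightarrow> wdeg 1 (int k - 1) Q \<le> wdeg 1 (int k - 1) P"
    proof (intro ballI impI)
      fix P assume P: "P \<in> M" "P \<noteq> 0"
      then have "wdeg 1 (-1) (phi L s Q) \<le> wdeg 1 (-1) (phi L s P)"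
        using B F[OF P] by auto
      then show "wdeg 1 (int k - 1) Q \<le> wdeg 1 (int k - 1) P"
        using F[OF P] FQ by auto
    qed
  qed
qed

end
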